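(* Let $p:\mathcal{T}_n\to[0,1]$ be any probability distribution on $\mathcal{T}_n$ that is invariant under relabelings of the leaves, and let $E$ denote expected value with respect to $p$ (for $D_n^2$, the two trees being chosen independently according to $p$). Then $$E(D_n^2)=2E(\overline\Phi^{(2)}_n)-2\cdot\frac{E(S_n)^2}{n}-4\cdot\frac{E(\Phi_n)^2}{n(n-1)}.$$
   Context: A phylogenetic tree with $n$ leaves is a fully resolved (binary) rooted tree with leaves bijectively labeled by $\{1,\dots,n\}$; $\mathcal{T}_n$ is the set of such trees. $\delta_T(i)$ is the depth (number of arcs from the root) of leaf $i$; for $i\ne j$, $\varphi_T(i,j)$ is the depth of the lowest common ancestor of leaves $i,j$; $\varphi_T(i,i)=\delta_T(i)$. $d_{\varphi,2}(T_1,T_2)=\sqrt{\sum_{1\le i\le j\le n}(\varphi_{T_1}(i,j)-\varphi_{T_2}(i,j))^2}$, and $D_n^2$ is the random variable $d_{\varphi,2}(T,T')^2$ for a random pair $(T,T')$. $S_n$, $\Phi_n$, $\overline\Phi^{(2)}_n$ are the random variables on $\mathcal{T}_n$ giving respectively the Sackin index $S(T)=\sum_{i=1}^n\delta_T(i)$, the total cophenetic index $\Phi(T)=\sum_{1\le i<j\le n}\varphi_T(i,j)$, and $\overline\Phi^{(2)}(T)=\sum_{1\le i\le j\le n}\varphi_T(i,j)^2$. *)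

theory Defs
  imports Complex_Main
begin

text \<open>Rooted binary trees with leaf labels. Unordered (non-planar) trees are
represented by a canonical ordered representative: at every internal node the
left subtree contains the smallest leaf label.\<close>

datatype 'a ptree = PLeaf 'a | PNode "'a ptree" "'a ptree"

fun leaf_list :: "'a ptree \<Rightarrow> 'a list" where
  "leaf_list (PLeaf a) = [a]"
| "leaf_list (PNode l r) = leaf_list l @ leaf_list r"

fun is_canon :: "nat ptree \<Rightarrow> bool" where
  "is_canon (PLeaf a) = True"
| "is_canon (PNode l r) = (is_canon l \<and> is_canon r \<and>
      Min (set (leaf_list l)) < Min (set (leaf_list r)))"

fun canon :: "nat ptree \<Rightarrow> nat ptree" where
  "canon (PLeaf a) = PLeaf a"
| "canon (PNode l r) =
     (if Min (set (leaf_list l)) < Min (set (leaf_list r))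
      then PNode (canon l) (canon r) else PNode (canon r) (canon l))"

definition phylo_trees :: "nat \<Rightarrow> nat ptree set" where
  "phylo_trees n = {T. distinct (leaf_list T) \<and> set (leaf_list T) = {1..n} \<and> is_canon T}"

definition relabel :: "(nat \<Rightarrow> nat) \<Rightarrow> nat ptree \<Rightarrow> nat ptree" where
  "relabel \<sigma> T = canon (map_ptree \<sigma> T)"

fun depth :: "nat ptree \<Rightarrow> nat \<Rightarrow> nat" where
  "depth (PLeaf a) i = 0"
| "depth (PNode l r) i =
     (if i \<in> set (leaf_list l) then 1 + depth l i
      else if i \<in> set (leaf_list r) then 1 + depth r i else 0)"

fun lca_depth :: "nat ptree \<Rightarrow> nat \<Rightarrow> nat \<Rightarrow> nat" where
  "lca_depth (PLeaf a) i j = 0"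
| "lca_depth (PNode l r) i j =
     (if i \<in> set (leaf_list l) \<and> j \<in> set (leaf_list l) then 1 + lca_depth l i j
      else if i \<in> set (leaf_list r) \<and> j \<in> set (leaf_list r) then 1 + lca_depth r i j
      else 0)"

definition phi :: "nat ptree \<Rightarrow> nat \<Rightarrow> nat \<Rightarrow> nat" where
  "phi T i j = (if i = j then depth T i else lca_depth T i j)"

definition sackin :: "nat \<Rightarrow> nat ptree \<Rightarrow> nat" where
  "sackin n T = (\<Sum>i\<in>{1..n}. depth T i)"

definition total_cophenetic :: "nat \<Rightarrow> nat ptree \<Rightarrow> nat" where
  "total_cophenetic n T = (\<Sum>(i,j)\<in>{(i,j). 1 \<le> i \<and> i < j \<and> j \<le> n}. phi T i j)"

definition phibar2 :: "nat \<Rightarrow> nat ptree \<Rightarrow> nat" where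
  "phibar2 n T = (\<Sum>(i,j)\<in>{(i,j). 1 \<le> i \<and> i \<le> j \<and> j \<le> n}. (phi T i j)^2)"

definition dphi2_sq :: "nat \<Rightarrow> nat ptree \<Rightarrow> nat ptree \<Rightarrow> real" where
  "dphi2_sq n T1 T2 = (\<Sum>(i,j)\<in>{(i,j). 1 \<le> i \<and> i \<le> j \<and> j \<le> n}.
       (real (phi T1 i j) - real (phi T2 i j))^2)"

definition expect :: "nat \<Rightarrow> (nat ptree \<Rightarrow> real) \<Rightarrow> (nat ptree \<Rightarrow> real) \<Rightarrow> real" where
  "expect n p f = (\<Sum>T\<in>phylo_trees n. p T * f T)"

definition is_distribution :: "nat \<Rightarrow> (nat ptree \<Rightarrow> real) \<Rightarrow> bool" where
  "is_distribution n p \<longleftrightarrow> (\<forall>T\<in>phylo_trees n. 0 \<le> p T \<and> p T \<le> 1) \<and>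
      (\<Sum>T\<in>phylo_trees n. p T) = 1"

definition relabel_invariant :: "nat \<Rightarrow> (nat ptree \<Rightarrow> real) \<Rightarrow> bool" where
  "relabel_invariant n p \<longleftrightarrow>
     (\<forall>\<sigma> T. bij_betw \<sigma> {1..n} {1..n} \<and> T \<in> phylo_trees n \<longrightarrow> p (relabel \<sigma> T) = p T)"

end

theory Submission
  imports Defs
begin


lemma set_ptree_leaf: "set_ptree t = set (leaf_list t)"
  by (induction t) auto

lemma leaf_list_map: "leaf_list (map_ptree f t) = map f (leaf_list t)"
  by (induction t) auto

lemma leaf_ne: "leaf_list t \<noteq> []"
  by (induction t) auto

lemma set_canon: "set (leaf_list (canon t)) = set (leaf_list t)"
  by (induction t) auto

lemma distinct_canon: "distinct (leaf_list (canon t)) = distinct (leaf_list t)"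
  by (induction t) (auto simp: set_canon)

lemma Min_neq: assumes "finite A" "finite B" "A \<noteq> {}" "B \<noteq> {}" "A \<inter> B = {}"
  shows "Min A \<noteq> Min B"
proof
  assume "Min A = Min B"
  then show False using Min_in[OF assms(1,3)] Min_in[OF assms(2,4)] assms(5) by (metis IntI empty_iff)
qed

lemma is_canon_canon: "distinct (leaf_list t) \<Longrightarrow> is_canon (canon t)"
proof (induction t)
  case (PLeaf x) then show ?case by simp
next
  case (PNode l r)
  have "Min (set (leaf_list l)) \<noteq> Min (set (leaf_list r))"
    using PNode.prems by (intro Min_neq) (auto simp: leaf_ne)
  moreover have "is_canon (canon l)" "is_canon (canon r)" using PNode by auto
  moreover have "set (leaf_list l) \<inter> set (leaf_list r) = {}" using PNode.prems by auto
  ultimately show ?case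
  proof (cases "Min (set (leaf_list l)) < Min (set (leaf_list r))")
    case True then show ?thesis using PNode by (simp add: set_canon)
  next
    case False
    then have "Min (set (leaf_list r)) < Min (set (leaf_list l))"
      using \<open>Min (set (leaf_list l)) \<noteq> Min (set (leaf_list r))\<close> by linarith
    then show ?thesis using False PNode by (simp add: set_canon)
  qed
qed

lemma canon_id: "is_canon t \<Longrightarrow> canon t = t"
  by (induction t) auto

lemma canon_swap: assumes "set (leaf_list x) \<inter> set (leaf_list y) = {}" shows "canon (PNode x y) = canon (PNode y x)"
proof -
  have ne: "Min (set (leaf_list x)) \<noteq> Min (set (leaf_list y))"
    using assms by (intro Min_neq) (auto simp: leaf_ne)
  show ?thesis
  proof (cases "Min (set (leaf_list x)) < Min (set (leaf_list y))")
    case True then show ?thesis by simp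
  next
    case False
    then have "Min (set (leaf_list y)) < Min (set (leaf_list x))" using ne by linarith
    then show ?thesis using False by simp
  qed
qed

lemma canon_map_canon: "distinct (leaf_list (map_ptree f t)) \<Longrightarrow> canon (map_ptree f (canon t)) = canon (map_ptree f t)"
proof (induction t)
  case (PLeaf x) then show ?case by simp
next
  case (PNode l r)
  have d: "set (leaf_list (map_ptree f (canon l))) \<inter> set (leaf_list (map_ptree f (canon r))) = {}"
    using PNode.prems by (auto simp: leaf_list_map set_canon)
  have IH: "canon (map_ptree f (canon l)) = canon (map_ptree f l)" "canon (map_ptree f (canon r)) = canon (map_ptree f r)"
    using PNode by auto
  have "canon (map_ptree f (canon (PNode l r))) = canon (PNode (map_ptree f (canon l)) (map_ptree f (canon r)))"
    using canon_swap[OF d] by auto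
  also have "\<dots> = canon (map_ptree f (PNode l r))"
    using IH by (simp add: leaf_list_map set_canon)
  finally show ?case .
qed

lemma depth_canon: "distinct (leaf_list t) \<Longrightarrow> depth (canon t) i = depth t i"
  by (induction t) (auto simp: set_canon distinct_canon)

lemma lca_canon: "distinct (leaf_list t) \<Longrightarrow> lca_depth (canon t) i j = lca_depth t i j"
  by (induction t) (auto simp: set_canon distinct_canon)

lemma depth_map: "inj_on f A \<Longrightarrow> set (leaf_list t) \<subseteq> A \<Longrightarrow> i \<in> A \<Longrightarrow> depth (map_ptree f t) (f i) = depth t i"
proof (induction t)
  case (PLeaf x) then show ?case by simp
next
  case (PNode l r)
  have "f i \<in> f ` set (leaf_list l) \<longleftrightarrow> i \<in> set (leaf_list l)" "f i \<in> f ` set (leaf_list r) \<longleftrightarrow> i \<in> set (leaf_list r)"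
    using PNode.prems by (auto dest: inj_onD)
  then show ?case using PNode by (simp add: leaf_list_map)
qed

lemma lca_map: "inj_on f A \<Longrightarrow> set (leaf_list t) \<subseteq> A \<Longrightarrow> i \<in> A \<Longrightarrow> j \<in> A \<Longrightarrow> lca_depth (map_ptree f t) (f i) (f j) = lca_depth t i j"
proof (induction t)
  case (PLeaf x) then show ?case by simp
next
  case (PNode l r)
  have "f i \<in> f ` set (leaf_list l) \<longleftrightarrow> i \<in> set (leaf_list l)" "f i \<in> f ` set (leaf_list r) \<longleftrightarrow> i \<in> set (leaf_list r)"
   "f j \<in> f ` set (leaf_list l) \<longleftrightarrow> j \<in> set (leaf_list l)" "f j \<in> f ` set (leaf_list r) \<longleftrightarrow> j \<in> set (leaf_list r)"
    using PNode.prems by (auto dest: inj_onD)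
  moreover have "lca_depth (map_ptree f l) (f i) (f j) = lca_depth l i j"
    "lca_depth (map_ptree f r) (f i) (f j) = lca_depth r i j"
    using PNode.IH(1)[OF PNode.prems(1) _ PNode.prems(3,4)] PNode.IH(2)[OF PNode.prems(1) _ PNode.prems(3,4)] PNode.prems(2)
    by simp_all
  ultimately show ?case
    by (simp only: lca_depth.simps ptree.map leaf_list_map set_map)
qed

lemma relabel_in: assumes "bij_betw \<sigma> {1..n} {1..n}" "T \<in> phylo_trees n"
  shows "relabel \<sigma> T \<in> phylo_trees n"
proof -
  have d: "distinct (leaf_list (map_ptree \<sigma> T))"
    using assms by (auto simp: phylo_trees_def leaf_list_map distinct_map bij_betw_def)
  have s: "set (leaf_list (map_ptree \<sigma> T)) = {1..n}"
    using assms by (auto simp: phylo_trees_def leaf_list_map bij_betw_def)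
  show ?thesis using d s by (simp add: relabel_def phylo_trees_def set_canon distinct_canon is_canon_canon)
qed

lemma phi_relabel: assumes "bij_betw \<sigma> {1..n} {1..n}" "T \<in> phylo_trees n" "i \<in> {1..n}" "j \<in> {1..n}"
  shows "phi (relabel \<sigma> T) (\<sigma> i) (\<sigma> j) = phi T i j"
proof -
  have inj: "inj_on \<sigma> {1..n}" using assms bij_betw_def by blast
  have d: "distinct (leaf_list (map_ptree \<sigma> T))"
    using assms by (auto simp: phylo_trees_def leaf_list_map distinct_map bij_betw_def)
  have s: "set (leaf_list T) \<subseteq> {1..n}" using assms by (auto simp: phylo_trees_def)
  have e: "\<sigma> i = \<sigma> j \<longleftrightarrow> i = j" using inj assms by (auto dest: inj_onD)
  have 1: "depth (canon (map_ptree \<sigma> T)) (\<sigma> i) = depth T i"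
    using depth_canon[OF d] depth_map[OF inj s assms(3)] by simp
  have 2: "lca_depth (canon (map_ptree \<sigma> T)) (\<sigma> i) (\<sigma> j) = lca_depth T i j"
    using lca_canon[OF d] lca_map[OF inj s assms(3,4)] by simp
  show ?thesis
    unfolding phi_def relabel_def by (simp only: e 1 2)
qed

lemma relabel_inv: assumes "\<And>x. x \<in> {1..n} \<Longrightarrow> \<tau> (\<sigma> x) = x" "bij_betw \<sigma> {1..n} {1..n}" "T \<in> phylo_trees n"
  shows "relabel \<tau> (relabel \<sigma> T) = T"
proof -
  have s: "set (leaf_list T) = {1..n}" "distinct (leaf_list T)" "is_canon T" using assms by (auto simp: phylo_trees_def)
  have m: "map_ptree \<tau> (map_ptree \<sigma> T) = T"
    by (metis (no_types, lifting) assms(1) comp_apply ptree.map_comp ptree.map_cong0 ptree.map_id0 id_apply s(1) set_ptree_leaf)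
  show ?thesis unfolding relabel_def
    by (subst canon_map_canon) (use m s canon_id in auto)
qed



lemma var_lemma:
  fixes p x :: "'b \<Rightarrow> real"
  assumes "finite P"
  shows "(\<Sum>a\<in>P. \<Sum>b\<in>P. p a * p b * (x a - x b)^2)
     = 2 * (\<Sum>a\<in>P. p a) * (\<Sum>a\<in>P. p a * (x a)^2) - 2 * (\<Sum>a\<in>P. p a * x a)^2"
proof -
  have "(\<Sum>a\<in>P. \<Sum>b\<in>P. p a * p b * (x a - x b)^2)
     = (\<Sum>a\<in>P. \<Sum>b\<in>P. p b * (p a * (x a)^2)) + (\<Sum>a\<in>P. \<Sum>b\<in>P. p a * (p b * (x b)^2))
       - 2 * (\<Sum>a\<in>P. \<Sum>b\<in>P. (p a * x a) * (p b * x b))"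
    by (simp add: power2_diff algebra_simps sum.distrib sum_subtractf sum_distrib_left power2_eq_square)
  also have "\<dots> = 2 * (\<Sum>a\<in>P. p a) * (\<Sum>a\<in>P. p a * (x a)^2) - 2 * (\<Sum>a\<in>P. p a * x a)^2"
    by (simp add: sum_distrib_left[symmetric] sum_distrib_right[symmetric] power2_eq_square sum.swap[of _ P P])
  finally show ?thesis .
qed

definition sw :: "nat \<Rightarrow> nat \<Rightarrow> nat \<Rightarrow> nat" where
  "sw a b x = (if x = a then b else if x = b then a else x)"

lemma sw_bij: "a \<in> {1..n} \<Longrightarrow> b \<in> {1..n} \<Longrightarrow> bij_betw (sw a b) {1..n} {1..n}"
  by (rule bij_betw_byWitness[where f'="sw a b"]) (auto simp: sw_def)

lemma card_O: "2 * card {(i,j). 1 \<le> i \<and> i < j \<and> j \<le> (n::nat)} = n * (n - 1)"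
proof (induction n)
  case 0
  have "{(i,j). 1 \<le> i \<and> i < j \<and> j \<le> (0::nat)} = {}" by auto
  then show ?case unfolding \<open>_ = {}\<close> by simp
next
  case (Suc n)
  have e: "{(i,j). 1 \<le> i \<and> i < j \<and> j \<le> Suc n} = {(i,j). 1 \<le> i \<and> i < j \<and> j \<le> n} \<union> (\<lambda>i. (i, Suc n)) ` {1..n}"
    by auto
  have f: "finite {(i,j). 1 \<le> i \<and> i < j \<and> j \<le> (n::nat)}"
    by (rule finite_subset[of _ "{1..n} \<times> {1..n}"]) auto
  have "card {(i,j). 1 \<le> i \<and> i < j \<and> j \<le> Suc n} = card {(i,j). 1 \<le> i \<and> i < j \<and> j \<le> n} + card ((\<lambda>i. (i, Suc n)) ` {1..n})"
    unfolding e by (rule card_Un_disjoint) (use f in auto)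
  also have "card ((\<lambda>i. (i, Suc n)) ` {1..n}) = n"
    by (subst card_image) (auto simp: inj_on_def)
  finally show ?case using Suc by (cases n) (auto simp: algebra_simps)
qed



theorem proposition4:
  fixes n :: nat and p :: "nat ptree \<Rightarrow> real"
  assumes "is_distribution n p"
    and "relabel_invariant n p"
  shows "(\<Sum>T1\<in>phylo_trees n. \<Sum>T2\<in>phylo_trees n. p T1 * p T2 * dphi2_sq n T1 T2)
       = 2 * expect n p (\<lambda>T. real (phibar2 n T))
         - 2 * (expect n p (\<lambda>T. real (sackin n T)))^2 / real n
         - 4 * (expect n p (\<lambda>T. real (total_cophenetic n T)))^2 / (real n * (real n - 1))"
proof -
  define P where "P = phylo_trees n"
  have sum1: "(\<Sum>T\<in>P. p T) = 1" using assms(1) by (simp add: is_distribution_def P_def)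
  have fin: "finite P"
  proof (rule ccontr)
    assume "infinite P" then show False using sum1 by simp
  qed
  have "P \<noteq> {}" using sum1 by auto
  then obtain T0 where "T0 \<in> P" by blast
  then have "set (leaf_list T0) = {1..n}" by (simp add: P_def phylo_trees_def)
  then have "{1..n} \<noteq> {}" using leaf_ne[of T0] by (metis set_empty)
  then have n1: "n \<ge> 1" by simp
  define e where "e i j = (\<Sum>T\<in>P. p T * real (phi T i j))" for i j
  have inv: "e (\<sigma> i) (\<sigma> j) = e i j"
    if bij: "bij_betw \<sigma> {1..n} {1..n}" and ij: "i \<in> {1..n}" "j \<in> {1..n}" for \<sigma> i j
  proof -
    define \<tau> where "\<tau> = inv_into {1..n} \<sigma>"
    have btau: "bij_betw \<tau> {1..n} {1..n}" unfolding \<tau>_def by (rule bij_betw_inv_into[OF bij])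
    have ts: "\<tau> (\<sigma> x) = x" if "x \<in> {1..n}" for x
      unfolding \<tau>_def using bij that by (meson bij_betw_inv_into_left)
    have st: "\<sigma> (\<tau> x) = x" if "x \<in> {1..n}" for x
      unfolding \<tau>_def using bij that by (meson bij_betw_inv_into_right)
    have b: "bij_betw (relabel \<sigma>) P P"
      apply (rule bij_betw_byWitness[where f'="relabel \<tau>"])
      using relabel_inv[OF ts bij] relabel_inv[OF st btau] relabel_in[OF bij] relabel_in[OF btau]
      by (auto simp: P_def)
    have "e i j = (\<Sum>T\<in>P. p (relabel \<sigma> T) * real (phi (relabel \<sigma> T) (\<sigma> i) (\<sigma> j)))"
      unfolding e_def
      using assms(2) bij phi_relabel[OF bij _ ij] by (intro sum.cong) (auto simp: relabel_invariant_def P_def)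
    also have "\<dots> = e (\<sigma> i) (\<sigma> j)"
      unfolding e_def by (rule sum.reindex_bij_betw[OF b, where g="\<lambda>T. p T * real (phi T (\<sigma> i) (\<sigma> j))"])
    finally show ?thesis by simp
  qed
  have diag: "e i i = e 1 1" if "i \<in> {1..n}" for i
    using inv[OF sw_bij[of 1 n i], of 1 1] that n1 by (simp add: sw_def)
  have offd: "e i j = e 1 2" if "1 \<le> i" "i < j" "j \<le> n" for i j
  proof -
    define j' where "j' = sw i 1 j"
    have j': "j' \<noteq> 1" "j' \<in> {1..n}" using that by (auto simp: j'_def sw_def)
    have "e i j = e 1 j'"
      using inv[OF sw_bij[of i n 1], of i j] that by (simp add: sw_def j'_def)
    also have "\<dots> = e 1 2"
      using inv[OF sw_bij[of j' n 2], of 1 j'] that j' by (simp add: sw_def)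
    finally show ?thesis .
  qed
  define I where "I = {(i,j). 1 \<le> i \<and> i \<le> j \<and> j \<le> n}"
  define Od where "Od = {(i,j). 1 \<le> i \<and> i < j \<and> j \<le> n}"
  define D where "D = (\<lambda>i. (i,i)) ` {1..n}"
  define f where "f T q = real (phi T (fst q) (snd q))" for T q
  define e' where "e' q = e (fst q) (snd q)" for q
  have e'_def2: "e' q = (\<Sum>T\<in>P. p T * f T q)" for q by (simp add: e'_def e_def f_def)
  have finI: "finite I" unfolding I_def by (rule finite_subset[of _ "{1..n} \<times> {1..n}"]) auto
  have finO: "finite Od" unfolding Od_def by (rule finite_subset[of _ "{1..n} \<times> {1..n}"]) auto
  have finD: "finite D" unfolding D_def by simp
  have IDO: "I = D \<union> Od" unfolding I_def D_def Od_def by auto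
  have DO: "D \<inter> Od = {}" unfolding D_def Od_def by auto
  have dphi: "dphi2_sq n T1 T2 = (\<Sum>q\<in>I. (f T1 q - f T2 q)^2)" for T1 T2
    unfolding dphi2_sq_def I_def f_def by (simp add: split_def)
  have "(\<Sum>T1\<in>P. \<Sum>T2\<in>P. p T1 * p T2 * dphi2_sq n T1 T2)
      = (\<Sum>T1\<in>P. \<Sum>T2\<in>P. \<Sum>q\<in>I. p T1 * p T2 * (f T1 q - f T2 q)^2)"
    by (simp add: dphi sum_distrib_left)
  also have "\<dots> = (\<Sum>T1\<in>P. \<Sum>q\<in>I. \<Sum>T2\<in>P. p T1 * p T2 * (f T1 q - f T2 q)^2)"
    by (rule sum.cong[OF refl], rule sum.swap)
  also have "\<dots> = (\<Sum>q\<in>I. \<Sum>T1\<in>P. \<Sum>T2\<in>P. p T1 * p T2 * (f T1 q - f T2 q)^2)"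
    by (rule sum.swap)
  also have "\<dots> = (\<Sum>q\<in>I. 2 * (\<Sum>T\<in>P. p T * (f T q)^2) - 2 * (e' q)^2)"
    using var_lemma[OF fin, of p] sum1 by (simp add: e'_def2)
  also have "\<dots> = 2 * (\<Sum>q\<in>I. \<Sum>T\<in>P. p T * (f T q)^2) - 2 * (\<Sum>q\<in>I. (e' q)^2)"
    by (simp add: sum_subtractf sum_distrib_left)
  finally have L: "(\<Sum>T1\<in>P. \<Sum>T2\<in>P. p T1 * p T2 * dphi2_sq n T1 T2)
      = 2 * (\<Sum>q\<in>I. \<Sum>T\<in>P. p T * (f T q)^2) - 2 * (\<Sum>q\<in>I. (e' q)^2)" .
  have B: "expect n p (\<lambda>T. real (phibar2 n T)) = (\<Sum>q\<in>I. \<Sum>T\<in>P. p T * (f T q)^2)"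
    unfolding expect_def phibar2_def P_def[symmetric] I_def[symmetric]
    by (simp add: f_def split_def sum_distrib_left sum.swap[of _ P I])
  have SI: "(\<Sum>q\<in>I. (e' q)^2) = (\<Sum>q\<in>D. (e' q)^2) + (\<Sum>q\<in>Od. (e' q)^2)"
    unfolding IDO by (rule sum.union_disjoint[OF finD finO DO])
  have e11: "(\<Sum>q\<in>D. (e' q)^2) = real n * (e 1 1)^2"
  proof -
    have "(\<Sum>q\<in>D. (e' q)^2) = (\<Sum>i\<in>{1..n}. (e i i)^2)"
      unfolding D_def by (subst sum.reindex) (auto simp: inj_on_def e'_def)
    also have "\<dots> = (\<Sum>i\<in>{1..n}. (e 1 1)^2)"
      by (rule sum.cong[OF refl]) (use diag in presburger)
    finally show ?thesis by simp
  qed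
  have S: "expect n p (\<lambda>T. real (sackin n T)) = real n * e 1 1"
  proof -
    have "expect n p (\<lambda>T. real (sackin n T)) = (\<Sum>i\<in>{1..n}. e i i)"
      unfolding expect_def sackin_def P_def[symmetric] e_def
      by (simp add: phi_def sum_distrib_left sum.swap[of _ P])
    also have "\<dots> = (\<Sum>i\<in>{1..n}. e 1 1)"
      by (rule sum.cong[OF refl]) (use diag in presburger)
    also have "\<dots> = real n * e 1 1" by simp
    finally show ?thesis .
  qed
  define c where "c = card Od"
  have eO: "(\<Sum>q\<in>Od. (e' q)^2) = real c * (e 1 2)^2"
  proof -
    have "(\<Sum>q\<in>Od. (e' q)^2) = (\<Sum>q\<in>Od. (e 1 2)^2)"
    proof (rule sum.cong[OF refl])
      fix q assume "q \<in> Od"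
      then obtain a b where "q = (a,b)" "1 \<le> a" "a < b" "b \<le> n" by (auto simp: Od_def)
      then show "(e' q)^2 = (e 1 2)^2" using offd[of a b] by (simp add: e'_def)
    qed
    then show ?thesis unfolding c_def by simp
  qed
  have C: "expect n p (\<lambda>T. real (total_cophenetic n T)) = real c * e 1 2"
  proof -
    have "expect n p (\<lambda>T. real (total_cophenetic n T)) = (\<Sum>q\<in>Od. e' q)"
      unfolding expect_def total_cophenetic_def P_def[symmetric] Od_def[symmetric] e'_def e_def
      by (simp add: split_def sum_distrib_left sum.swap[of _ P Od])
    also have "\<dots> = real c * e 1 2"
    proof -
      have "(\<Sum>q\<in>Od. e' q) = (\<Sum>q\<in>Od. e 1 2)"
      proof (rule sum.cong[OF refl])
        fix q assume "q \<in> Od"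
        then obtain a b where "q = (a,b)" "1 \<le> a" "a < b" "b \<le> n" by (auto simp: Od_def)
        then show "e' q = e 1 2" using offd[of a b] by (simp add: e'_def)
      qed
      then show ?thesis unfolding c_def by simp
    qed
    finally show ?thesis .
  qed
  have cn: "2 * real c = real n * (real n - 1)"
    using card_O[of n] n1 unfolding c_def Od_def by (metis (mono_tags) of_nat_1 of_nat_diff of_nat_mult of_nat_numeral)
  have fin_eq: "2 * (real n * (e 1 1)^2) = 2 * (real n * e 1 1)^2 / real n"
    using n1 by (simp add: power2_eq_square)
  have fin_eq2: "2 * (real c * (e 1 2)^2) = 4 * (real c * e 1 2)^2 / (real n * (real n - 1))"
  proof (cases "c = 0")
    case True then show ?thesis by simp
  next
    case False
    then have "real c > 0" by simp
    then show ?thesis unfolding cn[symmetric] by (simp add: power2_eq_square field_simps)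
  qed
  show ?thesis
    unfolding P_def[symmetric] L B SI e11 S eO C
    using fin_eq fin_eq2 by (simp add: algebra_simps)
qed

end
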